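(* Let $2\le d_1\le d_2\le d_3\le d_4$ and let $\rho$ be any (normalized) mixed state on $H_1\otimes H_2\otimes H_3\otimes H_4$ with $\dim H_i=d_i$. Then for every integer $s$ with $2\le s\le d_1$, $$C^2(\rho)\ \ge\ \frac{1}{\binom{d_1-2}{s-2}\binom{d_2-2}{s-2}\binom{d_3-1}{s-1}\binom{d_4-1}{s-1}}\sum_{\rho_{s\otimes s\otimes s\otimes s}}C^2(\rho_{s\otimes s\otimes s\otimes s}),$$ where the sum runs over all possible $s\otimes s\otimes s\otimes s$ substates $\rho_{s\otimes s\otimes s\otimes s}$ of $\rho$.
   Context: Each $H_i\cong\mathbb{C}^{d_i}$ has a fixed computational basis. $C$ denotes the four-partite concurrence: for a (not necessarily normalized) vector $|\varphi\rangle$ with $\sigma=|\varphi\rangle\langle\varphi|$, $C(|\varphi\rangle)=2^{-1}\sqrt{14(\mathrm{tr}\,\sigma)^2-\sum_\alpha\mathrm{tr}(\sigma_\alpha^2)}$, $\alpha$ running over the 14 nonempty proper subsets of $\{1,2,3,4\}$ and $\sigma_\alpha=\mathrm{tr}_{\bar\alpha}\sigma$; for a (possibly unnormalized) positive semidefinite $\sigma$, $C(\sigma)=\min\sum_iC(|\psi_i\rangle)$ over all decompositions $\sigma=\sum_i|\psi_i\rangle\langle\psi_i|$ into unnormalized vectors. Substates: given subsets $S_i\subseteq\{1,\dots,d_i\}$ with $|S_i|=s$ and projectors $G_i=\sum_{x\in S_i}|x\rangle\langle x|$, the $s\otimes s\otimes s\otimes s$ substate of $\rho$ is the unnormalized operator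 $(G_1\otimes G_2\otimes G_3\otimes G_4)\rho(G_1\otimes G_2\otimes G_3\otimes G_4)$ on $\otimes_i\mathrm{span}\{|x\rangle:x\in S_i\}$. $\binom{n}{k}=n!/(k!(n-k)!)$. *)

theory Defs
  imports Complex_Main
begin

text \<open>A basis index of the (sub)system on the parties in P is a function x :: nat => nat with
  x i in A i for i in P and x i = 0 (dummy) outside P. Vectors and operators are complex
  valued functions on such indices (values outside the carrier are irrelevant).\<close>

definition parties :: "nat set" where
  "parties = {0..<4}"

definition idx :: "(nat \<Rightarrow> nat set) \<Rightarrow> nat set \<Rightarrow> (nat \<Rightarrow> nat) set" where
  "idx A P = {x. (\<forall>i\<in>P. x i \<in> A i) \<and> (\<forall>i. i \<notin> P \<longrightarrow> x i = 0)}"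

definition merge :: "nat set \<Rightarrow> (nat \<Rightarrow> nat) \<Rightarrow> (nat \<Rightarrow> nat) \<Rightarrow> (nat \<Rightarrow> nat)" where
  "merge P a b = (\<lambda>i. if i \<in> P then a i else b i)"

type_synonym vec4 = "(nat \<Rightarrow> nat) \<Rightarrow> complex"
type_synonym op4 = "(nat \<Rightarrow> nat) \<Rightarrow> (nat \<Rightarrow> nat) \<Rightarrow> complex"

definition trace4 :: "(nat \<Rightarrow> nat set) \<Rightarrow> op4 \<Rightarrow> complex" where
  "trace4 A \<sigma> = (\<Sum>x\<in>idx A parties. \<sigma> x x)"

definition ptrace :: "(nat \<Rightarrow> nat set) \<Rightarrow> nat set \<Rightarrow> op4 \<Rightarrow> op4" where
  "ptrace A \<alpha> \<sigma> = (\<lambda>a a'. \<Sum>b\<in>idx A (parties - \<alpha>). \<sigma> (merge \<alpha> a b) (merge \<alpha> a' b))"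

definition trsq :: "(nat \<Rightarrow> nat set) \<Rightarrow> nat set \<Rightarrow> op4 \<Rightarrow> complex" where
  "trsq A \<alpha> \<sigma> = (let \<tau> = ptrace A \<alpha> \<sigma> in
      \<Sum>a\<in>idx A \<alpha>. \<Sum>a'\<in>idx A \<alpha>. \<tau> a a' * \<tau> a' a)"

definition proj :: "vec4 \<Rightarrow> op4" where
  "proj \<phi> = (\<lambda>x y. \<phi> x * cnj (\<phi> y))"

definition bipartitions :: "nat set set" where
  "bipartitions = {\<alpha>. \<alpha> \<subseteq> parties \<and> \<alpha> \<noteq> {} \<and> \<alpha> \<noteq> parties}"

definition conc_vec :: "(nat \<Rightarrow> nat set) \<Rightarrow> vec4 \<Rightarrow> real" where
  "conc_vec A \<phi> = (let \<sigma> = proj \<phi> in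
     sqrt (14 * (Re (trace4 A \<sigma>))\<^sup>2 - (\<Sum>\<alpha>\<in>bipartitions. Re (trsq A \<alpha> \<sigma>))) / 2)"

text \<open>Concurrence of a (possibly unnormalized) PSD operator: infimum (= minimum)
  over all finite decompositions into unnormalized vectors.\<close>
definition conc :: "(nat \<Rightarrow> nat set) \<Rightarrow> op4 \<Rightarrow> real" where
  "conc A \<sigma> = Inf {sum_list (map (conc_vec A) \<psi>s) | \<psi>s.
      \<forall>x\<in>idx A parties. \<forall>y\<in>idx A parties. \<sigma> x y = (\<Sum>\<psi>\<leftarrow>\<psi>s. proj \<psi> x y)}"

definition full_carrier :: "(nat \<Rightarrow> nat) \<Rightarrow> nat \<Rightarrow> nat set" where
  "full_carrier d = (\<lambda>i. {..<d i})"

definition density_op :: "(nat \<Rightarrow> nat) \<Rightarrow> op4 \<Rightarrow> bool" where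
  "density_op d \<rho> \<longleftrightarrow>
     (\<forall>x\<in>idx (full_carrier d) parties. \<forall>y\<in>idx (full_carrier d) parties. \<rho> y x = cnj (\<rho> x y)) \<and>
     (\<forall>\<phi>::vec4. let q = (\<Sum>x\<in>idx (full_carrier d) parties. \<Sum>y\<in>idx (full_carrier d) parties.
                      cnj (\<phi> x) * \<rho> x y * \<phi> y) in Im q = 0 \<and> Re q \<ge> 0) \<and>
     trace4 (full_carrier d) \<rho> = 1"

text \<open>Choices of s-element subsets S i of the local bases; the substate is rho restricted to
  idx S parties, viewed as an operator on the tensor product of the spans.\<close>
definition substate_choices :: "(nat \<Rightarrow> nat) \<Rightarrow> nat \<Rightarrow> (nat \<Rightarrow> nat set) set" where
  "substate_choices d s = {S. (\<forall>i\<in>parties. S i \<subseteq> {..<d i} \<and> card (S i) = s) \<and>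
                              (\<forall>i. i \<notin> parties \<longrightarrow> S i = {})}"

end

theory Submission
  imports Defs "HOL-Analysis.L2_Norm"
begin

lemma finite_idx: "finite \<alpha> \<Longrightarrow> (\<forall>i\<in>\<alpha>. finite (A i)) \<Longrightarrow> finite (idx A \<alpha>)"
proof -
  assume a: "finite \<alpha>" "\<forall>i\<in>\<alpha>. finite (A i)"
  have "idx A \<alpha> \<subseteq> {f. \<forall>x. (x\<in>\<alpha> \<longrightarrow> f x \<in> \<Union>(A`\<alpha>)) \<and> (x\<notin>\<alpha> \<longrightarrow> f x = 0)}"
    by (auto simp: idx_def)
  moreover have "finite {f. \<forall>x. (x\<in>\<alpha> \<longrightarrow> f x \<in> \<Union>(A`\<alpha>)) \<and> (x\<notin>\<alpha> \<longrightarrow> f x = (0::nat))}"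
    by (rule finite_set_of_finite_funs) (use a in auto)
  ultimately show ?thesis by (rule finite_subset)
qed

lemma merge_invol: "merge \<alpha> (merge \<alpha> x y) (merge \<alpha> y x) = x"
  by (auto simp: merge_def)

lemma merge_mm1: "merge \<alpha> (merge \<alpha> a b) (merge \<alpha> a' b') = merge \<alpha> a b'"
  by (auto simp: merge_def)

lemma merge_idx: "x \<in> idx A P \<Longrightarrow> y \<in> idx A P \<Longrightarrow> merge \<alpha> x y \<in> idx A P"
  by (auto simp: merge_def idx_def)

lemma sum_merge:
  assumes "\<alpha> \<subseteq> parties"
  shows "(\<Sum>x\<in>idx A parties. f x) = (\<Sum>a\<in>idx A \<alpha>. \<Sum>b\<in>idx A (parties - \<alpha>). f (merge \<alpha> a b))"
proof -
  have "(\<Sum>a\<in>idx A \<alpha>. \<Sum>b\<in>idx A (parties - \<alpha>). f (merge \<alpha> a b))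
     = (\<Sum>p\<in>idx A \<alpha> \<times> idx A (parties-\<alpha>). f (merge \<alpha> (fst p) (snd p)))"
    by (simp add: sum.cartesian_product case_prod_beta)
  also have "\<dots> = (\<Sum>x\<in>idx A parties. f x)"
    by (rule sum.reindex_bij_witness[where i="\<lambda>x. (\<lambda>i. if i\<in>\<alpha> then x i else 0, \<lambda>i. if i \<in> parties - \<alpha> then x i else 0)"
          and j="\<lambda>p. merge \<alpha> (fst p) (snd p)"])
      (use assms in \<open>auto simp: idx_def merge_def fun_eq_iff\<close>)
  finally show ?thesis by simp
qed

lemma trsq_xy:
  assumes "\<alpha> \<subseteq> parties"
  shows "trsq A \<alpha> (proj \<psi>) = (\<Sum>x\<in>idx A parties. \<Sum>y\<in>idx A parties.
           \<psi> x * \<psi> y * cnj (\<psi> (merge \<alpha> x y)) * cnj (\<psi> (merge \<alpha> y x)))"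
proof -
  let ?I = "idx A \<alpha>" and ?J = "idx A (parties - \<alpha>)"
  have "trsq A \<alpha> (proj \<psi>) = (\<Sum>a\<in>?I. \<Sum>a'\<in>?I. (\<Sum>b\<in>?J. \<psi> (merge \<alpha> a b) * cnj (\<psi> (merge \<alpha> a' b)))
        * (\<Sum>b'\<in>?J. \<psi> (merge \<alpha> a' b') * cnj (\<psi> (merge \<alpha> a b'))))"
    by (simp add: trsq_def ptrace_def proj_def)
  also have "\<dots> = (\<Sum>a\<in>?I. \<Sum>a'\<in>?I. \<Sum>b\<in>?J. \<Sum>b'\<in>?J. \<psi> (merge \<alpha> a b) * \<psi> (merge \<alpha> a' b') *
        cnj (\<psi> (merge \<alpha> a b')) * cnj (\<psi> (merge \<alpha> a' b)))"
    by (simp add: sum_product mult_ac)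
  also have "\<dots> = (\<Sum>a\<in>?I. \<Sum>b\<in>?J. \<Sum>a'\<in>?I. \<Sum>b'\<in>?J. \<psi> (merge \<alpha> a b) * \<psi> (merge \<alpha> a' b') *
        cnj (\<psi> (merge \<alpha> a b')) * cnj (\<psi> (merge \<alpha> a' b)))"
    by (rule sum.cong[OF refl], rule sum.swap)
  also have "\<dots> = (\<Sum>x\<in>idx A parties. \<Sum>y\<in>idx A parties.
           \<psi> x * \<psi> y * cnj (\<psi> (merge \<alpha> x y)) * cnj (\<psi> (merge \<alpha> y x)))"
    by (simp add: sum_merge[OF assms] merge_mm1)
  finally show ?thesis .
qed

definition gfun :: "nat set \<Rightarrow> vec4 \<Rightarrow> (nat\<Rightarrow>nat) \<Rightarrow> (nat\<Rightarrow>nat) \<Rightarrow> real" where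
  "gfun \<alpha> \<psi> x y = (cmod (\<psi> x * \<psi> y - \<psi> (merge \<alpha> x y) * \<psi> (merge \<alpha> y x)))^2"

lemma gfun_nonneg: "gfun \<alpha> \<psi> x y \<ge> 0"
  by (simp add: gfun_def)

lemma cmod_diff_sq: "(cmod (u - v))^2 = (cmod u)^2 + (cmod v)^2 - 2 * Re (u * cnj v)"
  unfolding cmod_power2 by (simp add: power2_eq_square algebra_simps)

lemma Re_mult_cnj: "Re (z * cnj z) = (cmod z)^2"
  unfolding cmod_power2 by (simp add: power2_eq_square)

lemma Re_trace: "Re (trace4 A (proj \<psi>)) = (\<Sum>x\<in>idx A parties. (cmod (\<psi> x))^2)"
  unfolding trace4_def proj_def Re_sum Re_mult_cnj ..

lemma sum_invol:
  "(\<Sum>x\<in>idx A parties. \<Sum>y\<in>idx A parties. h (merge \<alpha> x y) (merge \<alpha> y x))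
   = (\<Sum>x\<in>idx A parties. \<Sum>y\<in>idx A parties. (h x y :: real))"
proof -
  let ?X = "idx A parties"
  have "(\<Sum>x\<in>?X. \<Sum>y\<in>?X. h (merge \<alpha> x y) (merge \<alpha> y x))
     = (\<Sum>p\<in>?X\<times>?X. h (merge \<alpha> (fst p) (snd p)) (merge \<alpha> (snd p) (fst p)))"
    by (simp add: sum.cartesian_product case_prod_beta)
  also have "\<dots> = (\<Sum>p\<in>?X\<times>?X. h (fst p) (snd p))"
    by (rule sum.reindex_bij_witness[where i="\<lambda>p. (merge \<alpha> (fst p) (snd p), merge \<alpha> (snd p) (fst p))"
          and j="\<lambda>p. (merge \<alpha> (fst p) (snd p), merge \<alpha> (snd p) (fst p))"])
      (auto simp: merge_invol merge_idx)
  also have "\<dots> = (\<Sum>x\<in>?X. \<Sum>y\<in>?X. h x y)"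
    by (simp add: sum.cartesian_product case_prod_beta)
  finally show ?thesis .
qed

lemma g_sum:
  assumes "\<alpha> \<subseteq> parties"
  shows "(\<Sum>x\<in>idx A parties. \<Sum>y\<in>idx A parties. gfun \<alpha> \<psi> x y)
    = 2 * (Re (trace4 A (proj \<psi>)))^2 - 2 * Re (trsq A \<alpha> (proj \<psi>))"
proof -
  let ?X = "idx A parties"
  let ?n = "\<lambda>x. (cmod (\<psi> x))^2"
  have "(\<Sum>x\<in>?X. \<Sum>y\<in>?X. gfun \<alpha> \<psi> x y) = (\<Sum>x\<in>?X. \<Sum>y\<in>?X. ?n x * ?n y)
      + (\<Sum>x\<in>?X. \<Sum>y\<in>?X. ?n (merge \<alpha> x y) * ?n (merge \<alpha> y x))
      - 2 * (\<Sum>x\<in>?X. \<Sum>y\<in>?X. Re (\<psi> x * \<psi> y * cnj (\<psi> (merge \<alpha> x y)) * cnj (\<psi> (merge \<alpha> y x))))"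
    by (simp add: gfun_def cmod_diff_sq sum.distrib sum_subtractf sum_distrib_left norm_mult
        power_mult_distrib mult_ac)
  also have "(\<Sum>x\<in>?X. \<Sum>y\<in>?X. ?n (merge \<alpha> x y) * ?n (merge \<alpha> y x)) = (\<Sum>x\<in>?X. \<Sum>y\<in>?X. ?n x * ?n y)"
    by (rule sum_invol)
  also have "(\<Sum>x\<in>?X. \<Sum>y\<in>?X. ?n x * ?n y) = (Re (trace4 A (proj \<psi>)))^2"
    by (simp add: Re_trace power2_eq_square sum_product)
  also have "(\<Sum>x\<in>?X. \<Sum>y\<in>?X. Re (\<psi> x * \<psi> y * cnj (\<psi> (merge \<alpha> x y)) * cnj (\<psi> (merge \<alpha> y x))))
      = Re (trsq A \<alpha> (proj \<psi>))"
    by (simp add: trsq_xy[OF assms] Re_sum)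
  finally show ?thesis by simp
qed

lemma bip_eq: "bipartitions = Pow parties - {{}, parties}"
  by (auto simp: bipartitions_def)

lemma card_bip: "card bipartitions = 14"
proof -
  have "card (Pow parties) = 16" by (simp add: card_Pow parties_def)
  moreover have "parties \<noteq> {}" by (simp add: parties_def)
  ultimately show ?thesis unfolding bip_eq
    by (subst card_Diff_subset) (auto simp: parties_def)
qed

lemma bip_sub: "\<alpha> \<in> bipartitions \<Longrightarrow> \<alpha> \<subseteq> parties"
  by (simp add: bipartitions_def)

lemma conc_vec_sq:
  "(conc_vec A \<psi>)^2 = (\<Sum>\<alpha>\<in>bipartitions. \<Sum>x\<in>idx A parties. \<Sum>y\<in>idx A parties. gfun \<alpha> \<psi> x y) / 8"
proof -
  let ?N = "Re (trace4 A (proj \<psi>))"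
  let ?G = "\<lambda>\<alpha>. (\<Sum>x\<in>idx A parties. \<Sum>y\<in>idx A parties. gfun \<alpha> \<psi> x y)"
  have "14 * ?N^2 - (\<Sum>\<alpha>\<in>bipartitions. Re (trsq A \<alpha> (proj \<psi>)))
     = (\<Sum>\<alpha>\<in>bipartitions. ?N^2 - Re (trsq A \<alpha> (proj \<psi>)))"
    by (simp add: sum_subtractf card_bip)
  also have "\<dots> = (\<Sum>\<alpha>\<in>bipartitions. ?G \<alpha> / 2)"
    by (rule sum.cong[OF refl]) (simp add: g_sum bip_sub)
  finally have E: "14 * ?N^2 - (\<Sum>\<alpha>\<in>bipartitions. Re (trsq A \<alpha> (proj \<psi>))) = (\<Sum>\<alpha>\<in>bipartitions. ?G \<alpha>) / 2"
    by (simp add: sum_divide_distrib)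
  have nn: "(\<Sum>\<alpha>\<in>bipartitions. ?G \<alpha>) \<ge> 0"
    by (intro sum_nonneg) (simp add: gfun_nonneg)
  show ?thesis unfolding conc_vec_def Let_def E
    using nn by (simp add: power_divide)
qed

lemma num:
  fixes r t :: "nat \<Rightarrow> real"
  assumes r: "\<And>i. i<4 \<Longrightarrow> 0 < r i \<and> r i \<le> 1" and "r 1 \<le> r 0" "r 2 \<le> r 1" "r 3 \<le> r 2"
    and t: "\<And>i. i<4 \<Longrightarrow> t i = 1 \<or> t i = r i" and ij: "i<j" "j<4" "t i = r i" "t j = r j"
  shows "t 0 * t 1 * t 2 * t 3 \<le> r 0 * r 1"
proof -
  have r0: "0 < r 0" "r 0 \<le> 1" using r[of 0] by auto
  have r1: "0 < r 1" "r 1 \<le> 1" using r[of 1] by auto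
  have r2: "0 < r 2" "r 2 \<le> 1" using r[of 2] by auto
  have r3: "0 < r 3" "r 3 \<le> 1" using r[of 3] by auto
  have t0: "0 < t 0" "t 0 \<le> 1" using t[of 0] r0 by auto
  have t1: "0 < t 1" "t 1 \<le> 1" using t[of 1] r1 by auto
  have t2: "0 < t 2" "t 2 \<le> 1" using t[of 2] r2 by auto
  have t3: "0 < t 3" "t 3 \<le> 1" using t[of 3] r3 by auto
  have m: "\<And>a b c e::real. 0 \<le> a \<Longrightarrow> a \<le> b \<Longrightarrow> 0 \<le> c \<Longrightarrow> c \<le> e \<Longrightarrow> a * c \<le> b * e"
    by (simp add: mult_mono)
  have q: "\<And>a b::real. 0 \<le> a \<Longrightarrow> a \<le> 1 \<Longrightarrow> 0 \<le> b \<Longrightarrow> b \<le> 1 \<Longrightarrow> a * b \<le> 1"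
    by (simp add: mult_le_one)
  consider "i=0" "j=1" | "i=0" "j=2" | "i=0" "j=3" | "i=1" "j=2" | "i=1" "j=3" | "i=2" "j=3"
    using ij by linarith
  then show ?thesis
  proof cases
    case 1 then have "t 0 * t 1 * (t 2 * t 3) \<le> r 0 * r 1 * 1"
      using ij t0 t1 t2 t3 by (intro m q) auto
    then show ?thesis by (simp add: mult_ac)
  next
    case 2 then have "t 0 * t 2 * (t 1 * t 3) \<le> r 0 * r 1 * 1"
      using ij t0 t1 t2 t3 r1 \<open>r 2 \<le> r 1\<close> by (intro m q) auto
    then show ?thesis by (simp add: mult_ac)
  next
    case 3 then have "t 0 * t 3 * (t 1 * t 2) \<le> r 0 * r 1 * 1"
      using ij t0 t1 t2 t3 r1 \<open>r 2 \<le> r 1\<close> \<open>r 3 \<le> r 2\<close> by (intro m q) auto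
    then show ?thesis by (simp add: mult_ac)
  next
    case 4 then have "t 1 * t 2 * (t 0 * t 3) \<le> r 0 * r 1 * 1"
      using ij t0 t1 t2 t3 r1 \<open>r 2 \<le> r 1\<close> \<open>r 1 \<le> r 0\<close> by (intro m q) (auto simp: mult.commute)
    then show ?thesis by (simp add: mult_ac)
  next
    case 5 then have "t 1 * t 3 * (t 0 * t 2) \<le> r 0 * r 1 * 1"
      using ij t0 t1 t2 t3 r1 \<open>r 2 \<le> r 1\<close> \<open>r 1 \<le> r 0\<close> \<open>r 3 \<le> r 2\<close> by (intro m q) (auto simp: mult.commute)
    then show ?thesis by (simp add: mult_ac)
  next
    case 6 then have "j = 3" using ij by linarith
    then have "t 3 = r 3" "t 2 = r 2" using ij 6 by auto
    then have "t 2 * t 3 * (t 0 * t 1) \<le> r 0 * r 1 * 1"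
      using ij t0 t1 t2 t3 r1 \<open>r 2 \<le> r 1\<close> \<open>r 1 \<le> r 0\<close> \<open>r 3 \<le> r 2\<close> by (intro m q) auto
    then show ?thesis by (simp add: mult_ac)
  qed
qed

lemma card_T:
  assumes "B \<subseteq> {..<n}" "card B \<le> s"
  shows "card {U. U \<subseteq> {..<n} \<and> card U = s \<and> B \<subseteq> U} = (n - card B) choose (s - card B)"
proof -
  have fB: "finite B" using assms(1) finite_subset by blast
  have "bij_betw (\<lambda>U. U - B) {U. U \<subseteq> {..<n} \<and> card U = s \<and> B \<subseteq> U} {V. V \<subseteq> {..<n} - B \<and> card V = s - card B}"
  proof (rule bij_betw_byWitness[where f'="\<lambda>V. V \<union> B"])
    show "(\<lambda>U. U - B) ` {U. U \<subseteq> {..<n} \<and> card U = s \<and> B \<subseteq> U} \<subseteq> {V. V \<subseteq> {..<n} - B \<and> card V = s - card B}"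
      using fB by (auto simp: card_Diff_subset)
    show "(\<lambda>V. V \<union> B) ` {V. V \<subseteq> {..<n} - B \<and> card V = s - card B} \<subseteq> {U. U \<subseteq> {..<n} \<and> card U = s \<and> B \<subseteq> U}"
    proof
      fix W assume "W \<in> (\<lambda>V. V \<union> B) ` {V. V \<subseteq> {..<n} - B \<and> card V = s - card B}"
      then obtain V where V: "V \<subseteq> {..<n} - B" "card V = s - card B" and W: "W = V \<union> B" by auto
      have fV: "finite V" using V(1) finite_subset by blast
      have "card (V \<union> B) = card V + card B" using V fV fB by (intro card_Un_disjoint) auto
      then show "W \<in> {U. U \<subseteq> {..<n} \<and> card U = s \<and> B \<subseteq> U}" using V W assms by auto
    qed
  qed auto
  then have "card {U. U \<subseteq> {..<n} \<and> card U = s \<and> B \<subseteq> U} = card {V. V \<subseteq> {..<n} - B \<and> card V = s - card B}"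
    by (rule bij_betw_same_card)
  also have "\<dots> = card ({..<n} - B) choose (s - card B)" by (rule n_subsets) simp
  also have "card ({..<n} - B) = n - card B" using assms fB by (simp add: card_Diff_subset)
  finally show ?thesis .
qed

lemma swap_count:
  assumes "finite Ch" "finite B" "\<And>S. S \<in> Ch \<Longrightarrow> Y S \<subseteq> B"
  shows "(\<Sum>S\<in>Ch. \<Sum>p\<in>Y S. (g p :: real)) = (\<Sum>p\<in>B. real (card {S\<in>Ch. p \<in> Y S}) * g p)"
proof -
  have "(\<Sum>S\<in>Ch. \<Sum>p\<in>Y S. g p) = (\<Sum>S\<in>Ch. \<Sum>p\<in>{p. p \<in> B \<and> p \<in> Y S}. g p)"
    by (rule sum.cong[OF refl]) (use assms(3) in \<open>auto intro!: sum.cong\<close>)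
  also have "\<dots> = (\<Sum>p\<in>B. \<Sum>S\<in>{S. S \<in> Ch \<and> p \<in> Y S}. g p)"
    by (rule sum.swap_restrict[OF assms(1,2)])
  also have "\<dots> = (\<Sum>p\<in>B. real (card {S\<in>Ch. p \<in> Y S}) * g p)"
    by simp
  finally show ?thesis .
qed

lemma nz_witness:
  assumes "x \<in> idx A parties" "y \<in> idx A parties" "gfun \<alpha> \<psi> x y \<noteq> 0"
  shows "\<exists>i\<in>\<alpha>. \<exists>j\<in>parties-\<alpha>. x i \<noteq> y i \<and> x j \<noteq> y j"
proof (rule ccontr)
  assume "\<not> ?thesis"
  then consider "\<forall>i\<in>\<alpha>. x i = y i" | "\<forall>j\<in>parties-\<alpha>. x j = y j" by blast
  then show False
  proof cases
    case 1
    then have "merge \<alpha> x y = y" "merge \<alpha> y x = x" by (auto simp: merge_def fun_eq_iff)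
    then show False using assms(3) by (simp add: gfun_def mult.commute)
  next
    case 2
    then have "merge \<alpha> x y = x" "merge \<alpha> y x = y" using assms(1,2)
      unfolding merge_def fun_eq_iff idx_def by (smt (verit) Diff_iff mem_Collect_eq)+
    then show False using assms(3) by (simp add: gfun_def mult.commute)
  qed
qed

lemma e_eq:
  assumes "2 \<le> s" "s \<le> D"
  shows "real ((D-2) choose (s-2)) = real ((D-1) choose (s-1)) * (real (s-1) / real (D-1))"
proof -
  have "Suc (s-2) * (Suc (D-2) choose Suc (s-2)) = Suc (D-2) * ((D-2) choose (s-2))"
    by (rule Suc_times_binomial)
  moreover have "Suc (s-2) = s - 1" "Suc (D-2) = D - 1" using assms by auto
  ultimately have "(s-1) * ((D-1) choose (s-1)) = (D-1) * ((D-2) choose (s-2))" by simp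
  then have "real (s-1) * real ((D-1) choose (s-1)) = real (D-1) * real ((D-2) choose (s-2))"
    by (metis of_nat_mult)
  moreover have "real (D-1) > 0" using assms by simp
  ultimately show ?thesis by (simp add: field_simps)
qed

lemma parties_cases: "i \<in> parties \<longleftrightarrow> i = 0 \<or> i = 1 \<or> i = 2 \<or> i = 3"
  by (auto simp: parties_def)

lemma card_Ch_le:
  fixes x y d :: "nat \<Rightarrow> nat" and s :: nat
  defines "T \<equiv> \<lambda>i. {U. U \<subseteq> {..<d i} \<and> card U = s \<and> {x i, y i} \<subseteq> U}"
  shows "card {S\<in>substate_choices d s. (x,y) \<in> idx S parties \<times> idx S parties}
      \<le> card (T 0) * card (T 1) * card (T 2) * card (T 3)"
proof -
  have fT: "finite (T i)" for i
    by (rule finite_subset[of _ "Pow {..<d i}"]) (auto simp: T_def)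
  have "card {S\<in>substate_choices d s. (x,y) \<in> idx S parties \<times> idx S parties}
     \<le> card (T 0 \<times> T 1 \<times> T 2 \<times> T 3)"
  proof (rule card_inj_on_le[where f="\<lambda>S. (S 0, S 1, S 2, S 3)"])
    show "inj_on (\<lambda>S. (S 0, S 1, S 2, S 3)) {S\<in>substate_choices d s. (x,y) \<in> idx S parties \<times> idx S parties}"
    proof (rule inj_onI)
      fix S S' assume S: "S \<in> {S\<in>substate_choices d s. (x,y) \<in> idx S parties \<times> idx S parties}"
        and S': "S' \<in> {S\<in>substate_choices d s. (x,y) \<in> idx S parties \<times> idx S parties}"
        and eq: "(S 0, S 1, S 2, S 3) = (S' 0, S' 1, S' 2, S' 3)"
      show "S = S'"
      proof
        fix i show "S i = S' i"
        proof (cases "i \<in> parties")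
          case True then show ?thesis using eq unfolding parties_cases by auto
        next
          case False then show ?thesis using S S' by (simp add: substate_choices_def)
        qed
      qed
    qed
    show "(\<lambda>S. (S 0, S 1, S 2, S 3)) ` {S\<in>substate_choices d s. (x,y) \<in> idx S parties \<times> idx S parties}
       \<subseteq> T 0 \<times> T 1 \<times> T 2 \<times> T 3"
      by (auto simp: T_def substate_choices_def idx_def parties_def)
    show "finite (T 0 \<times> T 1 \<times> T 2 \<times> T 3)" using fT by simp
  qed
  then show ?thesis by (simp add: card_cartesian_product mult_ac)
qed

lemma count_bound:
  assumes d: "2 \<le> d 0" "d 0 \<le> d 1" "d 1 \<le> d 2" "d 2 \<le> d 3" "2 \<le> s" "s \<le> d 0"
    and \<alpha>: "\<alpha> \<in> bipartitions"
    and xy: "x \<in> idx (full_carrier d) parties" "y \<in> idx (full_carrier d) parties"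
    and nz: "gfun \<alpha> \<psi> x y \<noteq> 0"
  shows "real (card {S\<in>substate_choices d s. (x,y) \<in> idx S parties \<times> idx S parties})
    \<le> real ((d 0 - 2) choose (s - 2)) * real ((d 1 - 2) choose (s - 2))
         * real ((d 2 - 1) choose (s - 1)) * real ((d 3 - 1) choose (s - 1))"
proof -
  define T where "T = (\<lambda>i. {U. U \<subseteq> {..<d i} \<and> card U = s \<and> {x i, y i} \<subseteq> U})"
  define m where "m = (\<lambda>i. real ((d i - 1) choose (s-1)))"
  define r where "r = (\<lambda>i. real (s-1) / real (d i - 1))"
  define t where "t = (\<lambda>i. if x i = y i then 1 else r i)"
  have sd: "s \<le> d i" if "i < 4" for i
    using that d by (auto simp: less_Suc_eq numeral_eq_Suc)
  have r: "0 < r i \<and> r i \<le> 1" if "i < 4" for i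
    using sd[OF that] d by (auto simp: r_def)
  have rmono: "r j \<le> r i" if "d i \<le> d j" "i < 4" for i j
    using that sd[OF that(2)] d unfolding r_def by (intro divide_left_mono) auto
  have cT: "real (card (T i)) = m i * t i" if "i < 4" for i
  proof -
    have xi: "x i < d i" "y i < d i" using xy that
      by (auto simp: idx_def full_carrier_def parties_def)
    have cB: "card {x i, y i} = (if x i = y i then 1 else 2)" by auto
    have "card (T i) = (d i - card {x i, y i}) choose (s - card {x i, y i})"
      unfolding T_def using xi cB d by (intro card_T) auto
    then show ?thesis
      using e_eq[OF d(5) sd[OF that]] by (auto simp: cB m_def t_def r_def)
  qed
  obtain i j where ij: "i \<in> \<alpha>" "j \<in> parties - \<alpha>" "x i \<noteq> y i" "x j \<noteq> y j"
    using nz_witness[OF xy nz] by blast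
  have ij4: "i < 4" "j < 4" "i \<noteq> j" using ij bip_sub[OF \<alpha>] by (auto simp: parties_def)
  have tt: "t 0 * t 1 * t 2 * t 3 \<le> r 0 * r 1"
  proof (rule num[where i="min i j" and j="max i j"])
    show "\<And>i. i<4 \<Longrightarrow> 0 < r i \<and> r i \<le> 1" by (rule r)
    show "r 1 \<le> r 0" "r 2 \<le> r 1" "r 3 \<le> r 2" using d by (auto intro!: rmono)
    show "\<And>i. i<4 \<Longrightarrow> t i = 1 \<or> t i = r i" by (auto simp: t_def)
    show "min i j < max i j" "max i j < 4" using ij4 by auto
    show "t (min i j) = r (min i j)" "t (max i j) = r (max i j)"
      using ij by (auto simp: t_def min_def max_def)
  qed
  have m0: "m i \<ge> 0" for i by (simp add: m_def)
  have "card {S\<in>substate_choices d s. (x,y) \<in> idx S parties \<times> idx S parties}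
      \<le> card (T 0) * card (T 1) * card (T 2) * card (T 3)"
    unfolding T_def by (rule card_Ch_le)
  then have "real (card {S\<in>substate_choices d s. (x,y) \<in> idx S parties \<times> idx S parties})
      \<le> real (card (T 0)) * real (card (T 1)) * real (card (T 2)) * real (card (T 3))"
    by (simp only: of_nat_mult[symmetric] of_nat_le_iff)
  also have "\<dots> = (m 0 * m 1 * m 2 * m 3) * (t 0 * t 1 * t 2 * t 3)"
    using cT[of 0] cT[of 1] cT[of 2] cT[of 3] by (simp add: mult_ac)
  also have "\<dots> \<le> (m 0 * m 1 * m 2 * m 3) * (r 0 * r 1)"
    using tt m0 by (intro mult_left_mono) auto
  also have "\<dots> = (m 0 * r 0) * (m 1 * r 1) * m 2 * m 3" by (simp add: mult_ac)
  also have "\<dots> = real ((d 0 - 2) choose (s - 2)) * real ((d 1 - 2) choose (s - 2))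
         * real ((d 2 - 1) choose (s - 1)) * real ((d 3 - 1) choose (s - 1))"
    using e_eq[OF d(5) sd[of 0]] e_eq[OF d(5) sd[of 1]] by (simp add: m_def r_def)
  finally show ?thesis .
qed

lemma finite_Ch: "finite (substate_choices d s)"
proof -
  let ?B = "Pow (\<Union>i\<in>parties. {..<d i})"
  have "substate_choices d s \<subseteq> {S. \<forall>i. (i \<in> parties \<longrightarrow> S i \<in> ?B) \<and> (i \<notin> parties \<longrightarrow> S i = {})}"
    by (auto simp: substate_choices_def)
  moreover have "finite {S. \<forall>i. (i \<in> parties \<longrightarrow> S i \<in> ?B) \<and> (i \<notin> parties \<longrightarrow> S i = ({}::nat set))}"
    by (rule finite_set_of_finite_funs) (auto simp: parties_def)
  ultimately show ?thesis by (rule finite_subset)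
qed

lemma finite_XF: "finite (idx (full_carrier d) parties)"
  by (rule finite_idx) (auto simp: parties_def full_carrier_def)

lemma XS_sub: "S \<in> substate_choices d s \<Longrightarrow> idx S parties \<subseteq> idx (full_carrier d) parties"
  unfolding substate_choices_def idx_def full_carrier_def by blast

lemma pure_bound:
  assumes d: "2 \<le> d 0" "d 0 \<le> d 1" "d 1 \<le> d 2" "d 2 \<le> d 3" "2 \<le> s" "s \<le> d 0"
  shows "(\<Sum>S\<in>substate_choices d s. (conc_vec S \<psi>)^2)
    \<le> (real ((d 0 - 2) choose (s - 2)) * real ((d 1 - 2) choose (s - 2))
         * real ((d 2 - 1) choose (s - 1)) * real ((d 3 - 1) choose (s - 1))) * (conc_vec (full_carrier d) \<psi>)^2"
proof -
  let ?K = "real ((d 0 - 2) choose (s - 2)) * real ((d 1 - 2) choose (s - 2))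
         * real ((d 2 - 1) choose (s - 1)) * real ((d 3 - 1) choose (s - 1))"
  let ?Ch = "substate_choices d s"
  let ?XF = "idx (full_carrier d) parties"
  let ?G = "\<lambda>A \<alpha>. (\<Sum>x\<in>idx A parties. \<Sum>y\<in>idx A parties. gfun \<alpha> \<psi> x y)"
  have per: "(\<Sum>S\<in>?Ch. ?G S \<alpha>) \<le> ?K * ?G (full_carrier d) \<alpha>" if \<alpha>: "\<alpha> \<in> bipartitions" for \<alpha>
  proof -
    have "(\<Sum>S\<in>?Ch. ?G S \<alpha>) = (\<Sum>S\<in>?Ch. \<Sum>p\<in>idx S parties \<times> idx S parties. gfun \<alpha> \<psi> (fst p) (snd p))"
      by (simp add: sum.cartesian_product case_prod_beta)
    also have "\<dots> = (\<Sum>p\<in>?XF \<times> ?XF. real (card {S\<in>?Ch. p \<in> idx S parties \<times> idx S parties}) * gfun \<alpha> \<psi> (fst p) (snd p))"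
      by (rule swap_count) (use finite_Ch finite_XF XS_sub[of _ d s] in blast)+
    also have "\<dots> \<le> (\<Sum>p\<in>?XF \<times> ?XF. ?K * gfun \<alpha> \<psi> (fst p) (snd p))"
    proof (rule sum_mono)
      fix p assume p: "p \<in> ?XF \<times> ?XF"
      show "real (card {S\<in>?Ch. p \<in> idx S parties \<times> idx S parties}) * gfun \<alpha> \<psi> (fst p) (snd p)
          \<le> ?K * gfun \<alpha> \<psi> (fst p) (snd p)"
      proof (cases "gfun \<alpha> \<psi> (fst p) (snd p) = 0")
        case True then show ?thesis by simp
      next
        case False
        have "real (card {S\<in>?Ch. (fst p, snd p) \<in> idx S parties \<times> idx S parties}) \<le> ?K"
          using p False by (intro count_bound[OF d \<alpha>]) auto
        then show ?thesis using gfun_nonneg by (intro mult_right_mono) auto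
      qed
    qed
    also have "\<dots> = ?K * ?G (full_carrier d) \<alpha>"
      by (simp add: sum.cartesian_product case_prod_beta sum_distrib_left)
    finally show ?thesis .
  qed
  have "(\<Sum>S\<in>?Ch. (conc_vec S \<psi>)^2) = (\<Sum>\<alpha>\<in>bipartitions. \<Sum>S\<in>?Ch. ?G S \<alpha>) / 8"
    by (simp add: conc_vec_sq sum_divide_distrib[symmetric] sum.swap[of _ ?Ch])
  also have "\<dots> \<le> (\<Sum>\<alpha>\<in>bipartitions. ?K * ?G (full_carrier d) \<alpha>) / 8"
    using per by (intro divide_right_mono sum_mono) auto
  also have "\<dots> = ?K * (conc_vec (full_carrier d) \<psi>)^2"
    by (simp add: conc_vec_sq sum_distrib_left)
  finally show ?thesis .
qed

definition Qf :: "'a set \<Rightarrow> ('a \<Rightarrow> 'a \<Rightarrow> complex) \<Rightarrow> ('a \<Rightarrow> complex) \<Rightarrow> complex" where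
  "Qf I M \<phi> = (\<Sum>x\<in>I. \<Sum>y\<in>I. cnj (\<phi> x) * M x y * \<phi> y)"

lemma Qf_insert:
  assumes "finite I" "i \<notin> I"
  shows "Qf (insert i I) M \<phi> = Qf I M \<phi> + cnj (\<phi> i) * (\<Sum>y\<in>I. M i y * \<phi> y)
     + (\<Sum>x\<in>I. cnj (\<phi> x) * M x i) * \<phi> i + cnj (\<phi> i) * M i i * \<phi> i"
  using assms by (simp add: Qf_def sum.distrib sum_distrib_left sum_distrib_right algebra_simps)

lemma Qf_upd: "i \<notin> I \<Longrightarrow> Qf I M (\<phi>(i:=t)) = Qf I M \<phi>"
  unfolding Qf_def by (intro sum.cong refl) auto

lemma sum_upd: "i \<notin> I \<Longrightarrow> (\<Sum>y\<in>I. f y ((\<phi>(i:=t)) y)) = (\<Sum>y\<in>I. f y (\<phi> y))"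
  by (intro sum.cong refl) auto

lemma sum_ind: "finite I \<Longrightarrow> y \<in> I \<Longrightarrow> (\<Sum>z\<in>I. f z * (if z = y then 1 else 0)) = (f y :: complex)"
  by (simp add: if_distrib[of "(*) _"] cong: if_cong)
lemma sum_ind2: "finite I \<Longrightarrow> y \<in> I \<Longrightarrow> (\<Sum>z\<in>I. (if z = y then 1 else 0) * f z) = (f y :: complex)"
  by (simp add: if_distrib[of "\<lambda>x. x * _"] cong: if_cong)

lemma row_zero:
  assumes fin: "finite I" and iI: "i \<notin> I" and y: "y \<in> I"
    and herm: "\<forall>x\<in>insert i I. \<forall>y\<in>insert i I. M y x = cnj (M x y)"
    and psd: "\<forall>\<phi>. Im (Qf (insert i I) M \<phi>) = 0 \<and> 0 \<le> Re (Qf (insert i I) M \<phi>)"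
    and a00: "M i i = 0"
  shows "M i y = 0"
proof (rule ccontr)
  assume w0: "M i y \<noteq> 0"
  define w where "w = M i y"
  define k where "k = (Re (M y y) + 1) / (2 * (cmod w)^2)"
  define e where "e = (\<lambda>z. if z = y then (1::complex) else 0)"
  define \<phi> where "\<phi> = e(i := - complex_of_real k * w)"
  have ce: "cnj (e x) = e x" for x by (simp add: e_def)
  have inner: "(\<Sum>z\<in>I. e x * M x z * e z) = e x * M x y" for x
    unfolding e_def using fin y by (simp only: sum_ind)
  have q1: "Qf I M \<phi> = M y y"
  proof -
    have "Qf I M \<phi> = Qf I M e" unfolding \<phi>_def by (rule Qf_upd[OF iI])
    also have "\<dots> = (\<Sum>x\<in>I. e x * M x y)" unfolding Qf_def ce inner ..
    also have "\<dots> = M y y" unfolding e_def using fin y by (rule sum_ind2)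
    finally show ?thesis .
  qed
  have q2: "(\<Sum>z\<in>I. M i z * \<phi> z) = w"
  proof -
    have "(\<Sum>z\<in>I. M i z * \<phi> z) = (\<Sum>z\<in>I. M i z * e z)"
      unfolding \<phi>_def using iI by (intro sum.cong) auto
    also have "\<dots> = w" unfolding e_def w_def using fin y by (rule sum_ind)
    finally show ?thesis .
  qed
  have q3: "(\<Sum>z\<in>I. cnj (\<phi> z) * M z i) = cnj w"
  proof -
    have "(\<Sum>z\<in>I. cnj (\<phi> z) * M z i) = (\<Sum>z\<in>I. cnj (M i z * \<phi> z))"
    proof (rule sum.cong[OF refl])
      fix z assume "z \<in> I"
      then have "M z i = cnj (M i z)" using herm by blast
      then show "cnj (\<phi> z) * M z i = cnj (M i z * \<phi> z)" by simp
    qed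
    also have "\<dots> = cnj w" unfolding cnj_sum[symmetric] q2 ..
    finally show ?thesis .
  qed
  have "Qf (insert i I) M \<phi> = M y y - 2 * complex_of_real k * (cnj w * w)"
    by (simp only: Qf_insert[OF fin iI] q1 q2 q3 a00) (simp add: \<phi>_def algebra_simps)
  then have "Re (Qf (insert i I) M \<phi>) = Re (M y y) - 2 * k * (cmod w)^2"
  proof -
    have cw: "cnj w * w = complex_of_real ((cmod w)^2)" using complex_norm_square[of w] by (simp add: mult.commute)
    show "Qf (insert i I) M \<phi> = M y y - 2 * complex_of_real k * (cnj w * w) \<Longrightarrow> ?thesis"
      unfolding cw by simp
  qed
  also have "\<dots> = -1" using w0 by (simp add: k_def w_def field_simps)
  finally have "Re (Qf (insert i I) M \<phi>) = -1" .
  moreover have "0 \<le> Re (Qf (insert i I) M \<phi>)" using psd by blast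
  ultimately show False by simp
qed

lemma decomp_exists:
  assumes "finite I"
  shows "(\<forall>x\<in>I. \<forall>y\<in>I. M y x = cnj (M x y)) \<Longrightarrow> (\<forall>\<phi>. Im (Qf I M \<phi>) = 0 \<and> 0 \<le> Re (Qf I M \<phi>)) \<Longrightarrow>
    \<exists>\<psi>s. \<forall>x\<in>I. \<forall>y\<in>I. M x y = (\<Sum>\<psi>\<leftarrow>\<psi>s. \<psi> x * cnj (\<psi> y))"
  using assms
proof (induction I arbitrary: M rule: finite_induct)
  case empty then show ?case by auto
next
  case (insert i I M)
  note herm = insert.prems(1) and psd = insert.prems(2)
  let ?e = "\<lambda>z. if z = i then (1::complex) else 0"
  have e0: "Qf I M ?e = 0" "(\<Sum>y\<in>I. M i y * ?e y) = 0" "(\<Sum>x\<in>I. cnj (?e x) * M x i) = 0"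
    using insert.hyps by (auto intro!: sum.neutral simp: Qf_def)
  have "Qf (insert i I) M ?e = M i i"
    by (subst Qf_insert[OF insert.hyps]) (simp only: e0, simp)
  moreover have "Im (Qf (insert i I) M ?e) = 0 \<and> 0 \<le> Re (Qf (insert i I) M ?e)" using psd by blast
  ultimately have a: "Im (M i i) = 0" "Re (M i i) \<ge> 0" by auto
  define a where "a = M i i"
  have cnja: "cnj a = a" using a by (simp add: a_def complex_eq_iff)
  have h1: "(\<Sum>x\<in>I. cnj (\<phi> x) * M x i) = cnj (\<Sum>y\<in>I. M i y * \<phi> y)" for \<phi>
    unfolding cnj_sum complex_cnj_mult
  proof (rule sum.cong[OF refl])
    fix x assume "x \<in> I"
    then have "M x i = cnj (M i x)" using herm by blast
    then show "cnj (\<phi> x) * M x i = cnj (M i x) * cnj (\<phi> x)" by simp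
  qed
  show ?case
  proof (cases "Re a > 0")
    case pos: True
    define c where "c = complex_of_real (sqrt (Re a))"
    have cc: "c * c = a" using pos a by (simp add: c_def complex_eq_iff a_def)
    have cnjc: "cnj c = c" by (simp add: c_def)
    have c0: "c \<noteq> 0" using pos by (simp add: c_def)
    have a0: "a \<noteq> 0" using pos by auto
    define v where "v = (\<lambda>x. M x i / c)"
    define M' where "M' = (\<lambda>x y. M x y - v x * cnj (v y))"
    have herm': "\<forall>x\<in>I. \<forall>y\<in>I. M' y x = cnj (M' x y)"
    proof (intro ballI)
      fix x y assume "x \<in> I" "y \<in> I"
      then have "M y x = cnj (M x y)" using herm by blast
      then show "M' y x = cnj (M' x y)" by (simp add: M'_def)
    qed
    have cv: "cnj (v y) = M i y / c" if "y \<in> insert i I" for y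
    proof -
      have "M i y = cnj (M y i)" using herm that by blast
      then show ?thesis by (simp add: v_def cnjc)
    qed
    have psd': "\<forall>\<phi>. Im (Qf I M' \<phi>) = 0 \<and> 0 \<le> Re (Qf I M' \<phi>)"
    proof
      fix \<phi>
      define u where "u = (\<Sum>y\<in>I. M i y * \<phi> y)"
      define t where "t = - u / a"
      have "Qf (insert i I) M (\<phi>(i:=t)) = Qf I M \<phi> + (cnj t * u + cnj u * t + cnj t * a * t)"
      proof -
        have e1: "(\<Sum>y\<in>I. M i y * (\<phi>(i:=t)) y) = u"
          unfolding u_def using insert.hyps by (intro sum.cong) auto
        have "(\<Sum>x\<in>I. cnj ((\<phi>(i:=t)) x) * M x i) = (\<Sum>x\<in>I. cnj (\<phi> x) * M x i)"
          using insert.hyps by (intro sum.cong) auto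
        then have e2: "(\<Sum>x\<in>I. cnj ((\<phi>(i:=t)) x) * M x i) = cnj u"
          unfolding u_def h1 .
        show ?thesis
          by (simp only: Qf_insert[OF insert.hyps] Qf_upd[OF insert.hyps(2)] e1 e2 fun_upd_same a_def[symmetric])
            (simp add: algebra_simps)
      qed
      also have "cnj t * u + cnj u * t + cnj t * a * t = - cnj u * u / a"
        using a0 cnja by (simp add: t_def field_simps)
      also have "Qf I M \<phi> + - cnj u * u / a = Qf I M' \<phi>"
      proof -
        have s1: "(\<Sum>x\<in>I. cnj (\<phi> x) * v x) = cnj u / c"
        proof -
          have "(\<Sum>x\<in>I. cnj (\<phi> x) * v x) = (\<Sum>x\<in>I. cnj (\<phi> x) * M x i) / c"
            by (simp add: v_def sum_divide_distrib)
          then show ?thesis using h1[of \<phi>] by (simp add: u_def)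
        qed
        have s2: "(\<Sum>y\<in>I. cnj (v y) * \<phi> y) = u / c"
          by (simp add: cv u_def sum_divide_distrib)
        have "Qf I M' \<phi> = Qf I M \<phi> - (\<Sum>x\<in>I. cnj (\<phi> x) * v x) * (\<Sum>y\<in>I. cnj (v y) * \<phi> y)"
        proof -
          have pr: "(\<Sum>x\<in>I. cnj (\<phi> x) * v x) * (\<Sum>y\<in>I. cnj (v y) * \<phi> y)
              = (\<Sum>x\<in>I. \<Sum>y\<in>I. cnj (\<phi> x) * (v x * cnj (v y)) * \<phi> y)"
            unfolding sum_product by (intro sum.cong refl) (simp add: mult_ac)
          show ?thesis unfolding pr Qf_def M'_def
            by (simp add: sum_subtractf[symmetric] right_diff_distrib left_diff_distrib)
        qed
        also have "\<dots> = Qf I M \<phi> - cnj u * u / a"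
          by (simp add: s1 s2 cc[symmetric])
        finally show ?thesis by simp
      qed
      moreover have "Im (Qf (insert i I) M (\<phi>(i:=t))) = 0 \<and> 0 \<le> Re (Qf (insert i I) M (\<phi>(i:=t)))"
        using psd by blast
      ultimately show "Im (Qf I M' \<phi>) = 0 \<and> 0 \<le> Re (Qf I M' \<phi>)" by (simp only:)
    qed
    obtain \<psi>s where \<psi>s: "\<forall>x\<in>I. \<forall>y\<in>I. M' x y = (\<Sum>\<psi>\<leftarrow>\<psi>s. \<psi> x * cnj (\<psi> y))"
      using insert.IH[OF herm' psd'] by blast
    have vi: "v i = c" using cc c0 by (simp add: v_def a_def[symmetric] field_simps)
    show ?thesis
    proof (intro exI[of _ "v # map (\<lambda>\<psi>. \<psi>(i:=0)) \<psi>s"] ballI)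
      fix x y assume x: "x \<in> insert i I" and y: "y \<in> insert i I"
      show "M x y = (\<Sum>\<psi>\<leftarrow>v # map (\<lambda>\<psi>. \<psi>(i:=0)) \<psi>s. \<psi> x * cnj (\<psi> y))"
      proof (cases "x = i \<or> y = i")
        case True
        then have z: "(\<Sum>\<psi>\<leftarrow>map (\<lambda>\<psi>. \<psi>(i:=0)) \<psi>s. \<psi> x * cnj (\<psi> y)) = 0"
          by (induction \<psi>s) auto
        have "M x y = v x * cnj (v y)"
          using True
        proof
          assume "x = i" then show ?thesis using y c0 by (simp add: vi cv)
        next
          assume yi: "y = i"
          have "v x * cnj (v y) = v x * c" by (simp only: yi vi cnjc)
          also have "\<dots> = M x y" using c0 by (simp add: v_def yi)
          finally show ?thesis by simp
        qed
        then show ?thesis using z by simp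
      next
        case False
        then have xy: "x \<in> I" "y \<in> I" using x y by auto
        have "(\<Sum>\<psi>\<leftarrow>map (\<lambda>\<psi>. \<psi>(i:=0)) \<psi>s. \<psi> x * cnj (\<psi> y)) = (\<Sum>\<psi>\<leftarrow>\<psi>s. \<psi> x * cnj (\<psi> y))"
          using False by (induction \<psi>s) auto
        moreover have "M' x y = (\<Sum>\<psi>\<leftarrow>\<psi>s. \<psi> x * cnj (\<psi> y))" using \<psi>s xy by blast
        ultimately show ?thesis by (simp add: M'_def algebra_simps)
      qed
    qed
  next
    case False
    then have a00: "M i i = 0" using a by (simp add: a_def complex_eq_iff)
    have row: "M i y = 0" if y: "y \<in> I" for y
      using row_zero[OF insert.hyps(1,2) y herm psd a00] .
    have psd': "\<forall>\<phi>. Im (Qf I M \<phi>) = 0 \<and> 0 \<le> Re (Qf I M \<phi>)"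
    proof
      fix \<phi>
      have "Qf (insert i I) M (\<phi>(i:=0)) = Qf I M \<phi>"
        using insert.hyps by (simp add: Qf_insert Qf_upd)
      moreover have "Im (Qf (insert i I) M (\<phi>(i:=0))) = 0 \<and> 0 \<le> Re (Qf (insert i I) M (\<phi>(i:=0)))"
        using psd by blast
      ultimately show "Im (Qf I M \<phi>) = 0 \<and> 0 \<le> Re (Qf I M \<phi>)" by simp
    qed
    have herm': "\<forall>x\<in>I. \<forall>y\<in>I. M y x = cnj (M x y)" using herm by blast
    obtain \<psi>s where \<psi>s: "\<forall>x\<in>I. \<forall>y\<in>I. M x y = (\<Sum>\<psi>\<leftarrow>\<psi>s. \<psi> x * cnj (\<psi> y))"
      using insert.IH[OF herm' psd'] by blast
    show ?thesis
    proof (intro exI[of _ "map (\<lambda>\<psi>. \<psi>(i:=0)) \<psi>s"] ballI)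
      fix x y assume x: "x \<in> insert i I" and y: "y \<in> insert i I"
      show "M x y = (\<Sum>\<psi>\<leftarrow>map (\<lambda>\<psi>. \<psi>(i:=0)) \<psi>s. \<psi> x * cnj (\<psi> y))"
      proof (cases "x = i \<or> y = i")
        case True
        then have z: "(\<Sum>\<psi>\<leftarrow>map (\<lambda>\<psi>. \<psi>(i:=0)) \<psi>s. \<psi> x * cnj (\<psi> y)) = 0"
          by (induction \<psi>s) auto
        have "M x y = 0"
          using True
        proof
          assume "x = i" then show ?thesis using y row a00 by auto
        next
          assume yi: "y = i"
          have "M i x = 0" using row a00 x by auto
          moreover have "M x i = cnj (M i x)" using herm x by blast
          ultimately show ?thesis using yi by simp
        qed
        then show ?thesis using z by simp
      next
        case False
        then have xy: "x \<in> I" "y \<in> I" using x y by auto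
        have "(\<Sum>\<psi>\<leftarrow>map (\<lambda>\<psi>. \<psi>(i:=0)) \<psi>s. \<psi> x * cnj (\<psi> y)) = (\<Sum>\<psi>\<leftarrow>\<psi>s. \<psi> x * cnj (\<psi> y))"
          using False by (induction \<psi>s) auto
        then show ?thesis using \<psi>s xy by simp
      qed
    qed
  qed
qed


lemma conc_vec_nonneg: "conc_vec A \<psi> \<ge> 0"
proof -
  have "(conc_vec A \<psi>)^2 \<ge> 0" by simp
  have "14 * (Re (trace4 A (proj \<psi>)))^2 - (\<Sum>\<alpha>\<in>bipartitions. Re (trsq A \<alpha> (proj \<psi>)))
     = (\<Sum>\<alpha>\<in>bipartitions. (Re (trace4 A (proj \<psi>)))^2 - Re (trsq A \<alpha> (proj \<psi>)))"
    by (simp add: sum_subtractf card_bip)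
  also have "\<dots> = (\<Sum>\<alpha>\<in>bipartitions. (\<Sum>x\<in>idx A parties. \<Sum>y\<in>idx A parties. gfun \<alpha> \<psi> x y) / 2)"
    by (rule sum.cong[OF refl]) (simp add: g_sum bip_sub)
  also have "\<dots> \<ge> 0" by (intro sum_nonneg divide_nonneg_pos) (auto intro!: sum_nonneg simp: gfun_nonneg)
  finally show ?thesis unfolding conc_vec_def Let_def by simp
qed

lemma conc_bounds:
  assumes "\<forall>x\<in>idx A parties. \<forall>y\<in>idx A parties. \<rho> x y = (\<Sum>\<psi>\<leftarrow>\<psi>s. proj \<psi> x y)"
  shows "conc A \<rho> \<le> sum_list (map (conc_vec A) \<psi>s)" "0 \<le> conc A \<rho>"
proof -
  let ?D = "{sum_list (map (conc_vec A) \<psi>s) | \<psi>s.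
      \<forall>x\<in>idx A parties. \<forall>y\<in>idx A parties. \<rho> x y = (\<Sum>\<psi>\<leftarrow>\<psi>s. proj \<psi> x y)}"
  have mem: "sum_list (map (conc_vec A) \<psi>s) \<in> ?D" using assms by blast
  have nn: "\<And>z. z \<in> ?D \<Longrightarrow> 0 \<le> z" by (auto intro!: sum_list_nonneg simp: conc_vec_nonneg)
  have bdd: "bdd_below ?D" by (rule bdd_belowI[where m=0]) (rule nn)
  show "conc A \<rho> \<le> sum_list (map (conc_vec A) \<psi>s)"
    unfolding conc_def by (rule cInf_lower[OF mem bdd])
  show "0 \<le> conc A \<rho>"
    unfolding conc_def using mem nn by (intro cInf_greatest) auto
qed

lemma L2_sum_list:
  "L2_set (\<lambda>S. (\<Sum>\<psi>\<leftarrow>\<psi>s. f \<psi> S)) C \<le> (\<Sum>\<psi>\<leftarrow>\<psi>s. L2_set (f \<psi>) C)"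
proof (induction \<psi>s)
  case Nil then show ?case by (simp add: L2_set_0')
next
  case (Cons a \<psi>s)
  have "L2_set (\<lambda>S. (\<Sum>\<psi>\<leftarrow>a # \<psi>s. f \<psi> S)) C = L2_set (\<lambda>S. f a S + (\<Sum>\<psi>\<leftarrow>\<psi>s. f \<psi> S)) C"
    by simp
  also have "\<dots> \<le> L2_set (f a) C + L2_set (\<lambda>S. (\<Sum>\<psi>\<leftarrow>\<psi>s. f \<psi> S)) C"
    by (rule L2_set_triangle_ineq)
  also have "\<dots> \<le> L2_set (f a) C + (\<Sum>\<psi>\<leftarrow>\<psi>s. L2_set (f \<psi>) C)"
    using Cons by simp
  finally show ?case by simp
qed

theorem theorem4:
  fixes d :: "nat \<Rightarrow> nat" and \<rho> :: op4 and s :: nat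
  assumes "2 \<le> d 0" "d 0 \<le> d 1" "d 1 \<le> d 2" "d 2 \<le> d 3"
    and "density_op d \<rho>"
    and "2 \<le> s" "s \<le> d 0"
  shows "(conc (full_carrier d) \<rho>)\<^sup>2 \<ge>
    1 / (real ((d 0 - 2) choose (s - 2)) * real ((d 1 - 2) choose (s - 2))
         * real ((d 2 - 1) choose (s - 1)) * real ((d 3 - 1) choose (s - 1)))
    * (\<Sum>S\<in>substate_choices d s. (conc S \<rho>)\<^sup>2)"
proof -
  let ?K = "real ((d 0 - 2) choose (s - 2)) * real ((d 1 - 2) choose (s - 2))
         * real ((d 2 - 1) choose (s - 1)) * real ((d 3 - 1) choose (s - 1))"
  let ?F = "full_carrier d"
  let ?XF = "idx ?F parties"
  let ?Ch = "substate_choices d s"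
  let ?\<Sigma> = "(\<Sum>S\<in>?Ch. (conc S \<rho>)\<^sup>2)"
  have dd: "2 \<le> d 0" "d 0 \<le> d 1" "d 1 \<le> d 2" "d 2 \<le> d 3" "2 \<le> s" "s \<le> d 0"
    using assms by auto
  have Kpos: "?K > 0" using dd by (simp add: zero_less_binomial_iff)
  have herm: "\<forall>x\<in>?XF. \<forall>y\<in>?XF. \<rho> y x = cnj (\<rho> x y)"
    using assms(5) unfolding density_op_def by blast
  have psd: "\<forall>\<phi>. Im (Qf ?XF \<rho> \<phi>) = 0 \<and> 0 \<le> Re (Qf ?XF \<rho> \<phi>)"
    using assms(5) unfolding density_op_def Qf_def Let_def by blast
  have key: "sqrt ?\<Sigma> \<le> sqrt ?K * sum_list (map (conc_vec ?F) \<psi>s)"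
    if dec: "\<forall>x\<in>?XF. \<forall>y\<in>?XF. \<rho> x y = (\<Sum>\<psi>\<leftarrow>\<psi>s. proj \<psi> x y)" for \<psi>s
  proof -
    have decS: "\<forall>x\<in>idx S parties. \<forall>y\<in>idx S parties. \<rho> x y = (\<Sum>\<psi>\<leftarrow>\<psi>s. proj \<psi> x y)"
      if "S \<in> ?Ch" for S
      using dec XS_sub[OF that] by blast
    have "?\<Sigma> \<le> (\<Sum>S\<in>?Ch. (\<Sum>\<psi>\<leftarrow>\<psi>s. conc_vec S \<psi>)\<^sup>2)"
    proof (rule sum_mono)
      fix S assume "S \<in> ?Ch"
      from conc_bounds[OF decS[OF this]]
      show "(conc S \<rho>)\<^sup>2 \<le> (\<Sum>\<psi>\<leftarrow>\<psi>s. conc_vec S \<psi>)\<^sup>2"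
        by (intro power_mono) (auto simp: comp_def)
    qed
    then have "sqrt ?\<Sigma> \<le> L2_set (\<lambda>S. (\<Sum>\<psi>\<leftarrow>\<psi>s. conc_vec S \<psi>)) ?Ch"
      unfolding L2_set_def by simp
    also have "\<dots> \<le> (\<Sum>\<psi>\<leftarrow>\<psi>s. L2_set (\<lambda>S. conc_vec S \<psi>) ?Ch)"
      by (rule L2_sum_list)
    also have "\<dots> \<le> (\<Sum>\<psi>\<leftarrow>\<psi>s. sqrt ?K * conc_vec ?F \<psi>)"
    proof (rule sum_list_mono)
      fix \<psi>
      have "L2_set (\<lambda>S. conc_vec S \<psi>) ?Ch \<le> sqrt (?K * (conc_vec ?F \<psi>)^2)"
        unfolding L2_set_def by (rule real_sqrt_le_mono) (rule pure_bound[OF dd])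
      also have "\<dots> = sqrt ?K * conc_vec ?F \<psi>"
        by (simp add: real_sqrt_mult conc_vec_nonneg)
      finally show "L2_set (\<lambda>S. conc_vec S \<psi>) ?Ch \<le> sqrt ?K * conc_vec ?F \<psi>" .
    qed
    also have "\<dots> = sqrt ?K * sum_list (map (conc_vec ?F) \<psi>s)"
      by (simp add: sum_list_const_mult comp_def)
    finally show ?thesis .
  qed
  obtain \<psi>0 where \<psi>0: "\<forall>x\<in>?XF. \<forall>y\<in>?XF. \<rho> x y = (\<Sum>\<psi>\<leftarrow>\<psi>0. \<psi> x * cnj (\<psi> y))"
    using decomp_exists[OF finite_XF herm psd] by blast
  have dec0: "\<forall>x\<in>?XF. \<forall>y\<in>?XF. \<rho> x y = (\<Sum>\<psi>\<leftarrow>\<psi>0. proj \<psi> x y)"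
    using \<psi>0 by (simp add: proj_def)
  have lb: "sqrt ?\<Sigma> / sqrt ?K \<le> conc ?F \<rho>"
    unfolding conc_def[of ?F \<rho>]
  proof (rule cInf_greatest)
    show "{sum_list (map (conc_vec ?F) \<psi>s) | \<psi>s.
      \<forall>x\<in>?XF. \<forall>y\<in>?XF. \<rho> x y = (\<Sum>\<psi>\<leftarrow>\<psi>s. proj \<psi> x y)} \<noteq> {}"
      using dec0 by blast
    fix z assume "z \<in> {sum_list (map (conc_vec ?F) \<psi>s) | \<psi>s.
      \<forall>x\<in>?XF. \<forall>y\<in>?XF. \<rho> x y = (\<Sum>\<psi>\<leftarrow>\<psi>s. proj \<psi> x y)}"
    then obtain \<psi>s where z: "z = sum_list (map (conc_vec ?F) \<psi>s)"
      and dec: "\<forall>x\<in>?XF. \<forall>y\<in>?XF. \<rho> x y = (\<Sum>\<psi>\<leftarrow>\<psi>s. proj \<psi> x y)" by blast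
    show "sqrt ?\<Sigma> / sqrt ?K \<le> z"
      using key[OF dec] Kpos by (simp add: z divide_le_eq mult.commute)
  qed
  have \<Sigma>nn: "?\<Sigma> \<ge> 0" by (simp add: sum_nonneg)
  have "?\<Sigma> / ?K = (sqrt ?\<Sigma> / sqrt ?K)^2"
    using \<Sigma>nn Kpos by (simp add: power_divide)
  also have "\<dots> \<le> (conc ?F \<rho>)^2"
    using lb \<Sigma>nn Kpos by (intro power_mono) (auto intro!: divide_nonneg_nonneg)
  finally show ?thesis by simp
qed

end
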